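(* Let $\mathcal{X}$ be a probability distribution over a set of queries, $k \geq 1$, and $\hat q_1,\dots,\hat q_k,\hat c_1,\dots,\hat c_k : \mathcal{X} \to \mathbb{R}$ measurable functions. Let $\Lambda$ be the set of $\lambda \in \mathbb{R}$ for which there exist $x \in \mathcal{X}$ and $i \neq j$ with $\hat q_i(x) - \lambda \hat c_i(x) = \hat q_j(x) - \lambda \hat c_j(x)$. Let $0 \leq \lambda_1 < \lambda_2$. If $[\lambda_1,\lambda_2] \cap \Lambda = \emptyset$, then $S_{\lambda_1} = S_{\lambda_2}$. Furthermore, if $[\lambda_1,\lambda_2] \cap \Lambda = \{\lambda^*\}$, then $S_\lambda \subseteq S_{\lambda^*}$ for all $\lambda \in [\lambda_1,\lambda_2]$.
   Context: A routing strategy is a measurable function $s : \mathcal{X} \to \mathbb{R}^k$ with $s_i(x) \geq 0$ for all $i$ and $\sum_{i=1}^k s_i(x) = 1$ for all $x$. For $\lambda \in \mathbb{R}^+$, $S_\lambda$ is the set of routing strategies $s$ such that for all $x \in \mathcal{X}$ and $i \in \{1,\dots,k\}$: if $\hat q_i(x) - \lambda \hat c_i(x) < \max_j(\hat q_j(x) - \lambda \hat c_j(x))$ then $s_i(x) = 0$. *)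

theory Defs
  imports "HOL-Probability.Probability"
begin

text \<open>Models are indexed by 0..k-1. A routing strategy s : X -> R^k is represented
  as s :: 'a => nat => real, whose components i < k are used.\<close>

definition routing_strategy :: "'a measure \<Rightarrow> nat \<Rightarrow> ('a \<Rightarrow> nat \<Rightarrow> real) \<Rightarrow> bool" where
  "routing_strategy M k s \<longleftrightarrow>
     (\<forall>i<k. (\<lambda>x. s x i) \<in> borel_measurable M) \<and>
     (\<forall>x\<in>space M. \<forall>i<k. s x i \<ge> 0) \<and>
     (\<forall>x\<in>space M. (\<Sum>i<k. s x i) = 1)"

definition S_lambda :: "'a measure \<Rightarrow> nat \<Rightarrow> (nat \<Rightarrow> 'a \<Rightarrow> real) \<Rightarrow> (nat \<Rightarrow> 'a \<Rightarrow> real)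
    \<Rightarrow> real \<Rightarrow> ('a \<Rightarrow> nat \<Rightarrow> real) set" where
  "S_lambda M k q c l = {s. routing_strategy M k s \<and>
     (\<forall>x\<in>space M. \<forall>i<k.
        q i x - l * c i x < (MAX j\<in>{..<k}. q j x - l * c j x) \<longrightarrow> s x i = 0)}"

definition Lambda_set :: "'a measure \<Rightarrow> nat \<Rightarrow> (nat \<Rightarrow> 'a \<Rightarrow> real) \<Rightarrow> (nat \<Rightarrow> 'a \<Rightarrow> real)
    \<Rightarrow> real set" where
  "Lambda_set M k q c = {l. \<exists>x\<in>space M. \<exists>i<k. \<exists>j<k. i \<noteq> j \<and>
     q i x - l * c i x = q j x - l * c j x}"

end

theory Submission
  imports Defs
begin

lemma affine_zero:
  fixes A B l l' :: real
  assumes "A - l*B \<ge> 0" "A - l'*B < 0"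
  shows "\<exists>m. min l l' \<le> m \<and> m \<le> max l l' \<and> A - m*B = 0"
proof -
  have B: "B \<noteq> 0" using assms by auto
  show ?thesis
  proof (intro exI[of _ "A/B"] conjI)
    show "A - A/B*B = 0" using B by simp
  next
    show "min l l' \<le> A/B"
    proof (cases "B > 0")
      case True
      then have "l \<le> A/B" using assms by (simp add: pos_le_divide_eq mult.commute)
      then show ?thesis by linarith
    next
      case False
      then have "B < 0" using B by simp
      then have "l' \<le> A/B" using assms by (simp add: neg_le_divide_eq mult.commute)
      then show ?thesis by linarith
    qed
  next
    show "A/B \<le> max l l'"
    proof (cases "B > 0")
      case True
      then have "A/B \<le> l'" using assms by (simp add: pos_divide_le_eq mult.commute)
      then show ?thesis by linarith
    next
      case False
      then have "B < 0" using B by simp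
      then have "A/B \<le> l" using assms by (simp add: neg_divide_le_eq mult.commute)
      then show ?thesis by linarith
    qed
  qed
qed

lemma S_lambda_sub:
  assumes "\<And>x i. x \<in> space M \<Longrightarrow> i < k \<Longrightarrow> (\<forall>j<k. q j x - l * c j x \<le> q i x - l * c i x)
      \<Longrightarrow> (\<forall>j<k. q j x - l' * c j x \<le> q i x - l' * c i x)"
    and "k \<ge> 1"
  shows "S_lambda M k q c l \<subseteq> S_lambda M k q c l'"
proof
  fix s assume s: "s \<in> S_lambda M k q c l"
  have "0 \<in> {..<k}" using assms(2) by auto
  then have ne: "{..<k} \<noteq> {}" by blast
  show "s \<in> S_lambda M k q c l'"
    unfolding S_lambda_def
  proof (intro CollectI conjI ballI allI impI)
    show "routing_strategy M k s" using s by (simp add: S_lambda_def)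
  next
    fix x i assume x: "x \<in> space M" and i: "i < k"
      and lt: "q i x - l' * c i x < (MAX j\<in>{..<k}. q j x - l' * c j x)"
    from lt ne have "\<exists>j<k. q i x - l' * c i x < q j x - l' * c j x"
      by (simp add: Max_gr_iff) blast
    then have "\<not> (\<forall>j<k. q j x - l' * c j x \<le> q i x - l' * c i x)" by force
    with assms(1)[OF x i] have "\<exists>j<k. q i x - l * c i x < q j x - l * c j x" by force
    then have "q i x - l * c i x < (MAX j\<in>{..<k}. q j x - l * c j x)"
      using ne by (simp add: Max_gr_iff) blast
    then show "s x i = 0" using s x i by (simp add: S_lambda_def)
  qed
qed

lemma keep_max:
  fixes l l' :: real
  assumes "\<forall>j<k. q j x - l * c j x \<le> q i x - l * c i x"
    and "\<And>m j. min l l' \<le> m \<Longrightarrow> m \<le> max l l' \<Longrightarrow> j < k \<Longrightarrow> j \<noteq> i \<Longrightarrow>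
         q i x - m * c i x = q j x - m * c j x \<Longrightarrow> m = l'"
  shows "\<forall>j<k. q j x - l' * c j x \<le> q i x - l' * c i x"
proof (intro allI impI)
  fix j assume j: "j < k"
  show "q j x - l' * c j x \<le> q i x - l' * c i x"
  proof (rule ccontr)
    assume h: "\<not> ?thesis"
    then have ji: "j \<noteq> i" by auto
    have "\<exists>m. min l l' \<le> m \<and> m \<le> max l l' \<and> (q i x - q j x) - m*(c i x - c j x) = 0"
      apply (rule affine_zero)
      using assms(1) j h by (auto simp: algebra_simps)
    then obtain m where m: "min l l' \<le> m" "m \<le> max l l'" "(q i x - q j x) - m*(c i x - c j x) = 0"
      by blast
    have "m = l'" using assms(2)[OF m(1,2) j ji] m(3) by (simp add: algebra_simps)
    with m(3) h show False by (simp add: algebra_simps)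
  qed
qed

theorem lemma4:
  fixes M :: "'a measure" and k :: nat
    and q c :: "nat \<Rightarrow> 'a \<Rightarrow> real" and l1 l2 :: real
  assumes "prob_space M"
    and "k \<ge> 1"
    and "\<And>i. i < k \<Longrightarrow> q i \<in> borel_measurable M"
    and "\<And>i. i < k \<Longrightarrow> c i \<in> borel_measurable M"
    and "0 \<le> l1" and "l1 < l2"
  shows "({l1..l2} \<inter> Lambda_set M k q c = {} \<longrightarrow> S_lambda M k q c l1 = S_lambda M k q c l2)
       \<and> (\<forall>ls. {l1..l2} \<inter> Lambda_set M k q c = {ls} \<longrightarrow>
              (\<forall>l\<in>{l1..l2}. S_lambda M k q c l \<subseteq> S_lambda M k q c ls))"
proof (intro conjI impI allI ballI)
  assume E: "{l1..l2} \<inter> Lambda_set M k q c = {}"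
  have gen: "S_lambda M k q c a \<subseteq> S_lambda M k q c b" if ab: "a \<in> {l1..l2}" "b \<in> {l1..l2}" for a b
  proof (rule S_lambda_sub[OF _ assms(2)])
    fix x i assume x: "x \<in> space M" and i: "i < k"
      and h: "\<forall>j<k. q j x - a * c j x \<le> q i x - a * c i x"
    show "\<forall>j<k. q j x - b * c j x \<le> q i x - b * c i x"
    proof (rule keep_max[where q=q and c=c and k=k and x=x and i=i, OF h])
      fix m j assume m: "min a b \<le> m" "m \<le> max a b" and j: "j < k" "j \<noteq> i"
        and eq: "q i x - m * c i x = q j x - m * c j x"
      have "m \<in> Lambda_set M k q c" unfolding Lambda_set_def using x i j eq by force
      moreover have "m \<in> {l1..l2}" using m ab by (auto simp: min_def max_def split: if_splits)
      ultimately show "m = b" using E by blast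
    qed
  qed
  show "S_lambda M k q c l1 = S_lambda M k q c l2"
    using gen[of l1 l2] gen[of l2 l1] assms(6) by auto
next
  fix ls l assume E: "{l1..l2} \<inter> Lambda_set M k q c = {ls}" and l: "l \<in> {l1..l2}"
  have ls: "ls \<in> {l1..l2}" using E by blast
  show "S_lambda M k q c l \<subseteq> S_lambda M k q c ls"
  proof (rule S_lambda_sub[OF _ assms(2)])
    fix x i assume x: "x \<in> space M" and i: "i < k"
      and h: "\<forall>j<k. q j x - l * c j x \<le> q i x - l * c i x"
    show "\<forall>j<k. q j x - ls * c j x \<le> q i x - ls * c i x"
    proof (rule keep_max[where q=q and c=c and k=k and x=x and i=i, OF h])
      fix m j assume m: "min l ls \<le> m" "m \<le> max l ls" and j: "j < k" "j \<noteq> i"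
        and eq: "q i x - m * c i x = q j x - m * c j x"
      have "m \<in> Lambda_set M k q c" unfolding Lambda_set_def using x i j eq by force
      moreover have "m \<in> {l1..l2}" using m l ls by (auto simp: min_def max_def split: if_splits)
      ultimately show "m = ls" using E by blast
    qed
  qed
qed

end
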